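(* For every integer $n\geqslant 2$, $\mathbf{I}\mathbb{N}_{\infty}^n$ is an $F$-inverse semigroup.
   Context: $\mathbb{N}=\{1,2,3,\ldots\}$ and $\mathbb{N}^n$ carries the Euclidean metric $d$. A partial isometry of $\mathbb{N}^n$ is an injective partial map $\alpha\colon\mathbb{N}^n\rightharpoonup\mathbb{N}^n$ with $d((\mathbf{x})\alpha,(\mathbf{y})\alpha)=d(\mathbf{x},\mathbf{y})$ for all $\mathbf{x},\mathbf{y}\in\operatorname{dom}\alpha$; it is cofinite if $\mathbb{N}^n\setminus\operatorname{dom}\alpha$ and $\mathbb{N}^n\setminus\operatorname{ran}\alpha$ are finite. $\mathbf{I}\mathbb{N}_{\infty}^n$ is the monoid of all partial cofinite isometries of $\mathbb{N}^n$ under composition of partial maps. An inverse semigroup $S$ is $F$-inverse if every element of $S$ lies below a unique maximal element with respect to the natural partial order ($s\preccurlyeq t$ iff $s=te$ for some idempotent $e$), equivalently every class of the least group congruence has a maximum element. *)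

theory Defs
  imports Complex_Main
begin

text \<open>Points of N^n (N = {1,2,3,...}) are represented as lists of length n of
positive naturals.\<close>

definition Npts :: "nat \<Rightarrow> nat list set" where
  "Npts n = {x. length x = n \<and> (\<forall>i<n. x ! i \<ge> 1)}"

definition eucl_dist :: "nat list \<Rightarrow> nat list \<Rightarrow> real" where
  "eucl_dist x y = sqrt (\<Sum>i<length x. (real (x ! i) - real (y ! i))\<^sup>2)"

definition partial_isometry :: "nat \<Rightarrow> (nat list \<rightharpoonup> nat list) \<Rightarrow> bool" where
  "partial_isometry n \<alpha> \<longleftrightarrow>
     dom \<alpha> \<subseteq> Npts n \<and> ran \<alpha> \<subseteq> Npts n \<and> inj_on \<alpha> (dom \<alpha>) \<and>
     (\<forall>x\<in>dom \<alpha>. \<forall>y\<in>dom \<alpha>. eucl_dist (the (\<alpha> x)) (the (\<alpha> y)) = eucl_dist x y)"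

definition cofinite_pmap :: "nat \<Rightarrow> (nat list \<rightharpoonup> nat list) \<Rightarrow> bool" where
  "cofinite_pmap n \<alpha> \<longleftrightarrow> finite (Npts n - dom \<alpha>) \<and> finite (Npts n - ran \<alpha>)"

definition IN_inf :: "nat \<Rightarrow> (nat list \<rightharpoonup> nat list) set" where
  "IN_inf n = {\<alpha>. partial_isometry n \<alpha> \<and> cofinite_pmap n \<alpha>}"

text \<open>Composition of partial maps, maps written on the right: (x)(\<alpha>\<beta>) = ((x)\<alpha>)\<beta>.\<close>
definition pcomp :: "('a \<rightharpoonup> 'a) \<Rightarrow> ('a \<rightharpoonup> 'a) \<Rightarrow> ('a \<rightharpoonup> 'a)" where
  "pcomp \<alpha> \<beta> = \<beta> \<circ>\<^sub>m \<alpha>"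

definition semigroup_on :: "'a set \<Rightarrow> ('a \<Rightarrow> 'a \<Rightarrow> 'a) \<Rightarrow> bool" where
  "semigroup_on S m \<longleftrightarrow> (\<forall>a\<in>S. \<forall>b\<in>S. m a b \<in> S) \<and>
     (\<forall>a\<in>S. \<forall>b\<in>S. \<forall>c\<in>S. m (m a b) c = m a (m b c))"

definition inverse_semigroup_on :: "'a set \<Rightarrow> ('a \<Rightarrow> 'a \<Rightarrow> 'a) \<Rightarrow> bool" where
  "inverse_semigroup_on S m \<longleftrightarrow> semigroup_on S m \<and>
     (\<forall>a\<in>S. \<exists>!b. b \<in> S \<and> m (m a b) a = a \<and> m (m b a) b = b)"

definition nat_po :: "'a set \<Rightarrow> ('a \<Rightarrow> 'a \<Rightarrow> 'a) \<Rightarrow> 'a \<Rightarrow> 'a \<Rightarrow> bool" where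
  "nat_po S m s t \<longleftrightarrow> (\<exists>e\<in>S. m e e = e \<and> s = m t e)"

definition maximal_in :: "'a set \<Rightarrow> ('a \<Rightarrow> 'a \<Rightarrow> 'a) \<Rightarrow> 'a \<Rightarrow> bool" where
  "maximal_in S m u \<longleftrightarrow> u \<in> S \<and> (\<forall>t\<in>S. nat_po S m u t \<longrightarrow> t = u)"

definition F_inverse :: "'a set \<Rightarrow> ('a \<Rightarrow> 'a \<Rightarrow> 'a) \<Rightarrow> bool" where
  "F_inverse S m \<longleftrightarrow> inverse_semigroup_on S m \<and>
     (\<forall>s\<in>S. \<exists>!u. maximal_in S m u \<and> nat_po S m s u)"

end

theory Submission
  imports Defs
begin

definition sq :: "nat \<Rightarrow> nat list \<Rightarrow> nat list \<Rightarrow> int" where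
  "sq n x y = (\<Sum>k<n. (int (x!k) - int (y!k))^2)"

definition ip :: "nat \<Rightarrow> nat list \<Rightarrow> nat list \<Rightarrow> nat list \<Rightarrow> int" where
  "ip n q p r = (\<Sum>k<n. (int (p!k) - int (q!k)) * (int (r!k) - int (q!k)))"

lemma dist_sq: "length x = n \<Longrightarrow> eucl_dist x y = sqrt (of_int (sq n x y))"
  unfolding eucl_dist_def sq_def by (simp add: of_int_sum)

lemma iso_sq: "length x = n \<Longrightarrow> length x' = n \<Longrightarrow>
   (eucl_dist x' y' = eucl_dist x y) \<longleftrightarrow> (sq n x' y' = sq n x y)"
  by (simp add: dist_sq)

lemma polar: "2 * ip n q p r = sq n p q + sq n r q - sq n p r"
proof -
  have "sq n p q + sq n r q - sq n p r =
     (\<Sum>k<n. (int (p!k) - int (q!k))^2 + (int (r!k) - int (q!k))^2 - (int (p!k) - int (r!k))^2)"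
    unfolding sq_def by (simp add: sum.distrib sum_subtractf)
  also have "\<dots> = (\<Sum>k<n. 2 * ((int (p!k) - int (q!k)) * (int (r!k) - int (q!k))))"
    by (rule sum.cong) (simp_all add: power2_eq_square algebra_simps)
  finally show ?thesis unfolding ip_def by (simp add: sum_distrib_left)
qed

lemma finite_bound: "finite (F :: nat list set) \<Longrightarrow> \<exists>M. \<forall>z\<in>F. \<forall>k<length z. z ! k < M"
proof -
  assume "finite F"
  hence "finite (\<Union>z\<in>F. set z)" by simp
  then obtain M where "\<forall>v\<in>(\<Union>z\<in>F. set z). v < M" using finite_nat_set_iff_bounded by blast
  thus ?thesis by (meson UN_I nth_mem)
qed

lemma unit_int:
  fixes z :: "nat \<Rightarrow> int"
  assumes "(\<Sum>k<n. z k * z k) = 1"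
  shows "\<exists>k<n. (z k = 1 \<or> z k = -1) \<and> (\<forall>j<n. j \<noteq> k \<longrightarrow> z j = 0)"
proof -
  have "\<exists>k<n. z k \<noteq> 0"
  proof (rule ccontr)
    assume "\<not> ?thesis"
    hence "(\<Sum>k<n. z k * z k) = 0" by simp
    with assms show False by simp
  qed
  then obtain k where k: "k < n" "z k \<noteq> 0" by blast
  have split: "(\<Sum>k<n. z k * z k) = z k * z k + (\<Sum>j\<in>{..<n}-{k}. z j * z j)"
    using k by (simp add: sum.remove)
  have nn: "(\<Sum>j\<in>{..<n}-{k}. z j * z j) \<ge> 0" by (simp add: sum_nonneg)
  have "z k * z k \<ge> 1" using k(2)
    by (metis int_one_le_iff_zero_less mult_pos_pos mult_neg_neg linorder_neqE_linordered_idom)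
  with split nn assms have a: "z k * z k = 1" and b: "(\<Sum>j\<in>{..<n}-{k}. z j * z j) = 0" by linarith+
  from a have "z k = 1 \<or> z k = -1" using zmult_eq_1_iff by (metis square_eq_1_iff)
  moreover have "\<forall>j<n. j \<noteq> k \<longrightarrow> z j = 0"
  proof (intro allI impI)
    fix j assume "j < n" "j \<noteq> k"
    with b have "z j * z j = 0"
      using sum_nonneg_eq_0_iff[of "{..<n}-{k}" "\<lambda>j. z j * z j"] by simp
    thus "z j = 0" by simp
  qed
  ultimately show ?thesis using k by blast
qed

lemma single_sum:
  fixes z y :: "nat \<Rightarrow> int"
  assumes "k < n" "\<forall>j<n. j \<noteq> k \<longrightarrow> z j = 0"
  shows "(\<Sum>j<n. z j * y j) = z k * y k"
proof -
  have "(\<Sum>j<n. z j * y j) = z k * y k + (\<Sum>j\<in>{..<n}-{k}. z j * y j)"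
    using assms by (simp add: sum.remove)
  also have "(\<Sum>j\<in>{..<n}-{k}. z j * y j) = 0" using assms by (intro sum.neutral) auto
  finally show ?thesis by simp
qed

lemma Npts_len: "x \<in> Npts n \<Longrightarrow> length x = n" by (simp add: Npts_def)

lemma S_pts: assumes "\<alpha> \<in> IN_inf n" "\<alpha> x = Some y" shows "x \<in> Npts n \<and> y \<in> Npts n"
proof -
  have "dom \<alpha> \<subseteq> Npts n" "ran \<alpha> \<subseteq> Npts n" using assms(1) by (simp_all add: IN_inf_def partial_isometry_def)
  thus ?thesis using assms(2) by (meson domI ranI subsetD)
qed

lemma S_inj: assumes "\<alpha> \<in> IN_inf n" "\<alpha> x = Some z" "\<alpha> y = Some z" shows "x = y"
proof -
  have "inj_on \<alpha> (dom \<alpha>)" using assms(1) by (simp_all add: IN_inf_def partial_isometry_def)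
  thus ?thesis using assms(2,3) by (metis domI inj_onD)
qed

lemma S_dist: assumes "\<alpha> \<in> IN_inf n" "\<alpha> x = Some x'" "\<alpha> y = Some y'" shows "eucl_dist x' y' = eucl_dist x y"
proof -
  have "\<forall>x\<in>dom \<alpha>. \<forall>y\<in>dom \<alpha>. eucl_dist (the (\<alpha> x)) (the (\<alpha> y)) = eucl_dist x y"
    using assms(1) by (simp_all add: IN_inf_def partial_isometry_def)
  thus ?thesis using assms(2,3) by (metis domI option.sel)
qed

lemma S_sq: "\<alpha> \<in> IN_inf n \<Longrightarrow> \<alpha> x = Some x' \<Longrightarrow> \<alpha> y = Some y' \<Longrightarrow> sq n x' y' = sq n x y"
  using S_dist[of \<alpha> n x x' y y'] S_pts[of \<alpha> n x x'] iso_sq Npts_len by metis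
lemma S_cof: "\<alpha> \<in> IN_inf n \<Longrightarrow> finite (Npts n - dom \<alpha>) \<and> finite (Npts n - ran \<alpha>)"
  by (simp add: IN_inf_def cofinite_pmap_def)

lemma S_intro:
  assumes "\<And>x y. \<alpha> x = Some y \<Longrightarrow> x \<in> Npts n \<and> y \<in> Npts n"
    and "\<And>x y z. \<alpha> x = Some z \<Longrightarrow> \<alpha> y = Some z \<Longrightarrow> x = y"
    and "\<And>x y x' y'. \<alpha> x = Some x' \<Longrightarrow> \<alpha> y = Some y' \<Longrightarrow> eucl_dist x' y' = eucl_dist x y"
    and "finite (Npts n - dom \<alpha>)" "finite (Npts n - ran \<alpha>)"
  shows "\<alpha> \<in> IN_inf n"
proof -
  have "dom \<alpha> \<subseteq> Npts n" using assms(1) by blast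
  moreover have "ran \<alpha> \<subseteq> Npts n" using assms(1) by (force simp: ran_def)
  moreover have "inj_on \<alpha> (dom \<alpha>)" using assms(2) by (force simp: inj_on_def)
  moreover have "\<forall>x\<in>dom \<alpha>. \<forall>y\<in>dom \<alpha>. eucl_dist (the (\<alpha> x)) (the (\<alpha> y)) = eucl_dist x y"
    using assms(3) by force
  ultimately have "partial_isometry n \<alpha>" unfolding partial_isometry_def by (intro conjI)
  moreover have "cofinite_pmap n \<alpha>" unfolding cofinite_pmap_def using assms(4,5) by (intro conjI)
  ultimately show ?thesis unfolding IN_inf_def by (intro CollectI conjI)
qed

lemma comp_closed:
  assumes a: "\<alpha> \<in> IN_inf n" and b: "\<beta> \<in> IN_inf n"
  shows "pcomp \<alpha> \<beta> \<in> IN_inf n"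
proof (rule S_intro)
  show "\<And>x y. pcomp \<alpha> \<beta> x = Some y \<Longrightarrow> x \<in> Npts n \<and> y \<in> Npts n"
    using S_pts[OF a] S_pts[OF b] by (auto simp: pcomp_def map_comp_def split: option.splits)
  show "\<And>x y z. pcomp \<alpha> \<beta> x = Some z \<Longrightarrow> pcomp \<alpha> \<beta> y = Some z \<Longrightarrow> x = y"
    using S_inj[OF a] S_inj[OF b] by (auto simp: pcomp_def map_comp_def split: option.splits)
  show "\<And>x y x' y'. pcomp \<alpha> \<beta> x = Some x' \<Longrightarrow> pcomp \<alpha> \<beta> y = Some y' \<Longrightarrow> eucl_dist x' y' = eucl_dist x y"
    using S_dist[OF a] S_dist[OF b] by (auto simp: pcomp_def map_comp_def split: option.splits)
  have fa: "finite (Npts n - dom \<alpha>)" "finite (Npts n - ran \<alpha>)"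
   and fb: "finite (Npts n - dom \<beta>)" "finite (Npts n - ran \<beta>)"
    using S_cof[OF a] S_cof[OF b] by simp_all
  have "inj_on (\<lambda>x. the (\<alpha> x)) (dom \<alpha>)"
    using S_inj[OF a] by (auto simp: inj_on_def)
  hence f1: "finite ((\<lambda>x. the (\<alpha> x)) -` (Npts n - dom \<beta>) \<inter> dom \<alpha>)"
    using fb(1) finite_vimage_IntI by blast
  have "Npts n - dom (pcomp \<alpha> \<beta>) \<subseteq> (Npts n - dom \<alpha>) \<union> ((\<lambda>x. the (\<alpha> x)) -` (Npts n - dom \<beta>) \<inter> dom \<alpha>)"
    using S_pts[OF a] by (auto simp: pcomp_def map_comp_def split: option.splits)
  thus "finite (Npts n - dom (pcomp \<alpha> \<beta>))" using fa f1 by (meson finite_UnI finite_subset)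
  have "Npts n - ran (pcomp \<alpha> \<beta>) \<subseteq> (Npts n - ran \<beta>) \<union> (\<lambda>z. the (\<beta> z)) ` (Npts n - ran \<alpha>)"
  proof
    fix y assume y: "y \<in> Npts n - ran (pcomp \<alpha> \<beta>)"
    show "y \<in> (Npts n - ran \<beta>) \<union> (\<lambda>z. the (\<beta> z)) ` (Npts n - ran \<alpha>)"
    proof (cases "y \<in> ran \<beta>")
      case True
      then obtain z where z: "\<beta> z = Some y" by (auto simp: ran_def)
      have "z \<notin> ran \<alpha>"
      proof
        assume "z \<in> ran \<alpha>"
        then obtain x where "\<alpha> x = Some z" by (auto simp: ran_def)
        hence "pcomp \<alpha> \<beta> x = Some y" using z by (simp add: pcomp_def)
        with y show False by (auto simp: ran_def)
      qed
      moreover have "z \<in> Npts n" using S_pts[OF b z] by simp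
      ultimately show ?thesis using z by force
    qed (use y in auto)
  qed
  thus "finite (Npts n - ran (pcomp \<alpha> \<beta>))" using fa fb by (meson finite_UnI finite_imageI finite_subset)
qed

lemma comp_assoc: "pcomp (pcomp a b) c = pcomp a (pcomp b c)"
  by (auto simp: pcomp_def map_comp_def fun_eq_iff split: option.split)

definition pinv :: "('a \<rightharpoonup> 'a) \<Rightarrow> ('a \<rightharpoonup> 'a)" where
  "pinv \<alpha> y = (if \<exists>x. \<alpha> x = Some y then Some (SOME x. \<alpha> x = Some y) else None)"

lemma pinv_iff:
  assumes "\<And>x y z. \<alpha> x = Some z \<Longrightarrow> \<alpha> y = Some z \<Longrightarrow> x = y"
  shows "pinv \<alpha> y = Some x \<longleftrightarrow> \<alpha> x = Some y"
proof
  assume "pinv \<alpha> y = Some x"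
  hence e: "\<exists>x. \<alpha> x = Some y" and xe: "x = (SOME x. \<alpha> x = Some y)" by (auto simp: pinv_def split: if_splits)
  from e have "\<alpha> (SOME x. \<alpha> x = Some y) = Some y" by (rule someI_ex)
  thus "\<alpha> x = Some y" using xe by simp
next
  assume h: "\<alpha> x = Some y"
  hence "(SOME x. \<alpha> x = Some y) = x" using assms by (intro some_equality) auto
  thus "pinv \<alpha> y = Some x" using h by (auto simp: pinv_def)
qed

lemma pinv_closed:
  assumes a: "\<alpha> \<in> IN_inf n" shows "pinv \<alpha> \<in> IN_inf n"
proof -
  have pi: "\<And>x y. pinv \<alpha> y = Some x \<longleftrightarrow> \<alpha> x = Some y"
    by (intro pinv_iff) (blast intro: S_inj[OF a])
  have d: "dom (pinv \<alpha>) = ran \<alpha>"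
  proof (rule set_eqI)
    fix y have "y \<in> dom (pinv \<alpha>) \<longleftrightarrow> (\<exists>x. pinv \<alpha> y = Some x)" by auto
    also have "\<dots> \<longleftrightarrow> (\<exists>x. \<alpha> x = Some y)" using pi by simp
    also have "\<dots> \<longleftrightarrow> y \<in> ran \<alpha>" by (simp add: ran_def)
    finally show "y \<in> dom (pinv \<alpha>) \<longleftrightarrow> y \<in> ran \<alpha>" .
  qed
  have r: "ran (pinv \<alpha>) = dom \<alpha>"
  proof (rule set_eqI)
    fix x have "x \<in> ran (pinv \<alpha>) \<longleftrightarrow> (\<exists>y. pinv \<alpha> y = Some x)" by (simp add: ran_def)
    also have "\<dots> \<longleftrightarrow> (\<exists>y. \<alpha> x = Some y)" using pi by simp
    also have "\<dots> \<longleftrightarrow> x \<in> dom \<alpha>" by auto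
    finally show "x \<in> ran (pinv \<alpha>) \<longleftrightarrow> x \<in> dom \<alpha>" .
  qed
  show ?thesis
  proof (rule S_intro)
    show "\<And>x y. pinv \<alpha> x = Some y \<Longrightarrow> x \<in> Npts n \<and> y \<in> Npts n"
      using S_pts[OF a] pi by simp
    show "\<And>x y z. pinv \<alpha> x = Some z \<Longrightarrow> pinv \<alpha> y = Some z \<Longrightarrow> x = y"
      using pi S_inj[OF a] by simp
    show "\<And>x y x' y'. pinv \<alpha> x = Some x' \<Longrightarrow> pinv \<alpha> y = Some y' \<Longrightarrow> eucl_dist x' y' = eucl_dist x y"
    proof -
      fix x y x' y' assume "pinv \<alpha> x = Some x'" "pinv \<alpha> y = Some y'"
      hence "\<alpha> x' = Some x" "\<alpha> y' = Some y" using pi by auto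
      thus "eucl_dist x' y' = eucl_dist x y" using S_dist[OF a] by metis
    qed
    show "finite (Npts n - dom (pinv \<alpha>))" "finite (Npts n - ran (pinv \<alpha>))"
      using S_cof[OF a] d r by simp_all
  qed
qed

lemma semigroup: "semigroup_on (IN_inf n) pcomp"
  unfolding semigroup_on_def using comp_closed comp_assoc by blast

lemma pinv_pi: "\<alpha> \<in> IN_inf n \<Longrightarrow> pinv \<alpha> y = Some x \<longleftrightarrow> \<alpha> x = Some y"
  by (intro pinv_iff) (blast intro: S_inj)

lemma inv_ax1: assumes a: "\<alpha> \<in> IN_inf n" shows "pcomp (pcomp \<alpha> (pinv \<alpha>)) \<alpha> = \<alpha>"
proof
  fix x show "pcomp (pcomp \<alpha> (pinv \<alpha>)) \<alpha> x = \<alpha> x"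
  proof (cases "\<alpha> x")
    case (Some y)
    hence "pinv \<alpha> y = Some x" using pinv_pi[OF a] by simp
    thus ?thesis using Some by (simp add: pcomp_def)
  qed (simp add: pcomp_def)
qed

lemma inv_ax2: assumes a: "\<alpha> \<in> IN_inf n" shows "pcomp (pcomp (pinv \<alpha>) \<alpha>) (pinv \<alpha>) = pinv \<alpha>"
proof
  fix y show "pcomp (pcomp (pinv \<alpha>) \<alpha>) (pinv \<alpha>) y = pinv \<alpha> y"
  proof (cases "pinv \<alpha> y")
    case (Some x)
    hence "\<alpha> x = Some y" using pinv_pi[OF a] by simp
    thus ?thesis using Some by (simp add: pcomp_def)
  qed (simp add: pcomp_def)
qed

lemma inv_unique:
  assumes a: "\<alpha> \<in> IN_inf n" and b: "\<beta> \<in> IN_inf n"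
    and h1: "pcomp (pcomp \<alpha> \<beta>) \<alpha> = \<alpha>" and h2: "pcomp (pcomp \<beta> \<alpha>) \<beta> = \<beta>"
  shows "\<beta> = pinv \<alpha>"
proof -
  have A: "\<beta> y = Some x" if "\<alpha> x = Some y" for x y
  proof -
    have "(\<alpha> \<circ>\<^sub>m (\<beta> \<circ>\<^sub>m \<alpha>)) x = Some y" using h1 that by (simp add: pcomp_def)
    moreover have "(\<beta> \<circ>\<^sub>m \<alpha>) x = \<beta> y" using that by simp
    ultimately obtain z where z: "\<beta> y = Some z" "\<alpha> z = Some y"
      by (auto simp: map_comp_def split: option.splits)
    hence "z = x" using S_inj[OF a] that by blast
    thus ?thesis using z by simp
  qed
  have B: "\<alpha> z = Some y" if "\<beta> y = Some z" for y z
  proof -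
    have "(\<beta> \<circ>\<^sub>m (\<alpha> \<circ>\<^sub>m \<beta>)) y = Some z" using h2 that by (simp add: pcomp_def)
    moreover have "(\<alpha> \<circ>\<^sub>m \<beta>) y = \<alpha> z" using that by simp
    ultimately obtain w where w: "\<alpha> z = Some w" "\<beta> w = Some z"
      by (auto simp: map_comp_def split: option.splits)
    hence "w = y" using S_inj[OF b] that by blast
    thus ?thesis using w by simp
  qed
  show ?thesis
  proof
    fix y show "\<beta> y = pinv \<alpha> y"
    proof (cases "\<beta> y")
      case None
      show ?thesis
      proof (cases "pinv \<alpha> y")
        case (Some x) hence "\<alpha> x = Some y" using pinv_pi[OF a] by simp
        hence "\<beta> y = Some x" by (rule A)
        with None show ?thesis by simp
      qed (simp add: None)
    next
      case (Some z)
      hence "\<alpha> z = Some y" by (rule B)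
      hence "pinv \<alpha> y = Some z" using pinv_pi[OF a] by simp
      with Some show ?thesis by simp
    qed
  qed
qed

lemma inverse_sg: "inverse_semigroup_on (IN_inf n) pcomp"
  unfolding inverse_semigroup_on_def
proof (intro conjI ballI)
  show "semigroup_on (IN_inf n) pcomp" by (rule semigroup)
  fix a assume a: "a \<in> IN_inf n"
  show "\<exists>!b. b \<in> IN_inf n \<and> pcomp (pcomp a b) a = a \<and> pcomp (pcomp b a) b = b"
  proof (rule ex1I[of _ "pinv a"])
    show "pinv a \<in> IN_inf n \<and> pcomp (pcomp a (pinv a)) a = a \<and> pcomp (pcomp (pinv a) a) (pinv a) = pinv a"
      using pinv_closed[OF a] inv_ax1[OF a] inv_ax2[OF a] by blast
    fix b assume "b \<in> IN_inf n \<and> pcomp (pcomp a b) a = a \<and> pcomp (pcomp b a) b = b"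
    thus "b = pinv a" using inv_unique[OF a] by blast
  qed
qed

lemma idem_id:
  assumes e: "e \<in> IN_inf n" and ee: "pcomp e e = e" and ex: "e x = Some y"
  shows "y = x"
proof -
  have "(e \<circ>\<^sub>m e) x = Some y" using ee ex by (simp add: pcomp_def)
  hence "e y = Some y" using ex by simp
  thus ?thesis using S_inj[OF e ex] by simp
qed

lemma po_le: assumes "nat_po (IN_inf n) pcomp s t" shows "s \<subseteq>\<^sub>m t"
proof -
  obtain e where e: "e \<in> IN_inf n" "pcomp e e = e" "s = pcomp t e"
    using assms unfolding nat_po_def by blast
  show ?thesis unfolding map_le_def
  proof
    fix x assume "x \<in> dom s"
    then obtain z where z: "s x = Some z" by auto
    hence "(e \<circ>\<^sub>m t) x = Some z" using e(3) by (simp add: pcomp_def)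
    then obtain y where y: "t x = Some y" "e y = Some z" by (auto simp: map_comp_def split: option.splits)
    have "z = y" using idem_id[OF e(1,2) y(2)] .
    thus "s x = t x" using y z by simp
  qed
qed

definition pid :: "'a set \<Rightarrow> ('a \<rightharpoonup> 'a)" where
  "pid A y = (if y \<in> A then Some y else None)"

lemma le_po:
  assumes s: "s \<in> IN_inf n" and t: "t \<in> IN_inf n" and le: "s \<subseteq>\<^sub>m t"
  shows "nat_po (IN_inf n) pcomp s t"
proof -
  let ?e = "pid (ran s)"
  have rs: "ran s \<subseteq> Npts n" using S_pts[OF s] by (auto simp: ran_def)
  have de: "dom ?e = ran s" by (auto simp: pid_def dom_def)
  have re: "ran ?e = ran s" by (auto simp: pid_def ran_def split: if_splits)
  have eS: "?e \<in> IN_inf n"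
  proof (rule S_intro)
    show "\<And>x y. ?e x = Some y \<Longrightarrow> x \<in> Npts n \<and> y \<in> Npts n" using rs by (auto simp: pid_def split: if_splits)
    show "\<And>x y z. ?e x = Some z \<Longrightarrow> ?e y = Some z \<Longrightarrow> x = y" by (auto simp: pid_def split: if_splits)
    show "\<And>x y x' y'. ?e x = Some x' \<Longrightarrow> ?e y = Some y' \<Longrightarrow> eucl_dist x' y' = eucl_dist x y"
      by (auto simp: pid_def split: if_splits)
    show "finite (Npts n - dom ?e)" "finite (Npts n - ran ?e)" using S_cof[OF s] de re by simp_all
  qed
  have ee: "pcomp ?e ?e = ?e" by (auto simp: pcomp_def pid_def map_comp_def fun_eq_iff)
  have "s = pcomp t ?e"
  proof
    fix x show "s x = pcomp t ?e x"
    proof (cases "s x")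
      case (Some y)
      hence "t x = Some y" using le by (metis domI map_le_def)
      moreover have "y \<in> ran s" using Some by (auto simp: ran_def)
      ultimately show ?thesis using Some by (simp add: pcomp_def pid_def)
    next
      case None
      show ?thesis
      proof (cases "t x")
        case (Some y)
        have "y \<notin> ran s"
        proof
          assume "y \<in> ran s"
          then obtain x' where x': "s x' = Some y" by (auto simp: ran_def)
          hence "t x' = Some y" using le by (metis domI map_le_def)
          hence "x' = x" using S_inj[OF t] Some by blast
          with x' None show False by simp
        qed
        thus ?thesis using Some None by (simp add: pcomp_def pid_def)
      qed (simp add: pcomp_def None)
    qed
  qed
  thus ?thesis unfolding nat_po_def using eS ee by blast
qed

definition P :: "(nat \<Rightarrow> nat) \<Rightarrow> nat \<Rightarrow> nat list \<Rightarrow> nat list" where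
  "P \<rho> n x = map (\<lambda>k. x ! \<rho> k) [0..<n]"

definition T :: "(nat \<Rightarrow> nat) \<Rightarrow> nat \<Rightarrow> (nat list \<rightharpoonup> nat list)" where
  "T \<rho> n = (\<lambda>x. if x \<in> Npts n then Some (P \<rho> n x) else None)"

lemma P_len[simp]: "length (P \<rho> n x) = n" by (simp add: P_def)
lemma P_nth[simp]: "k < n \<Longrightarrow> P \<rho> n x ! k = x ! \<rho> k" by (simp add: P_def)

lemma P_pts: assumes "bij_betw \<rho> {..<n} {..<n}" "x \<in> Npts n" shows "P \<rho> n x \<in> Npts n"
proof -
  have "\<And>k. k < n \<Longrightarrow> \<rho> k < n" using assms(1) by (meson bij_betw_apply lessThan_iff)
  thus ?thesis using assms(2) by (auto simp: Npts_def)
qed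

lemma T_in: assumes b: "bij_betw \<rho> {..<n} {..<n}" shows "T \<rho> n \<in> IN_inf n"
proof -
  let ?s = "inv_into {..<n} \<rho>"
  have bs: "bij_betw ?s {..<n} {..<n}" using b by (rule bij_betw_inv_into)
  have r1: "\<And>i. i < n \<Longrightarrow> \<rho> (?s i) = i" using b by (simp add: bij_betw_inv_into_right)
  have r2: "\<And>k. k < n \<Longrightarrow> ?s (\<rho> k) = k" using b by (simp add: bij_betw_inv_into_left)
  have s_lt: "\<And>i. i < n \<Longrightarrow> ?s i < n" using bs by (meson bij_betw_apply lessThan_iff)
  have rho_lt: "\<And>i. i < n \<Longrightarrow> \<rho> i < n" using b by (meson bij_betw_apply lessThan_iff)
  have dT: "dom (T \<rho> n) = Npts n" by (auto simp: T_def dom_def)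
  have rT: "Npts n \<subseteq> ran (T \<rho> n)"
  proof
    fix y assume y: "y \<in> Npts n"
    let ?x = "P ?s n y"
    have xN: "?x \<in> Npts n" using P_pts[OF bs y] .
    have "P \<rho> n ?x = y"
      by (rule nth_equalityI) (use y in \<open>simp_all add: Npts_len r2 s_lt rho_lt\<close>)
    thus "y \<in> ran (T \<rho> n)" using xN by (auto simp: T_def ran_def)
  qed
  show ?thesis
  proof (rule S_intro)
    show "\<And>x y. T \<rho> n x = Some y \<Longrightarrow> x \<in> Npts n \<and> y \<in> Npts n"
      using P_pts[OF b] by (auto simp: T_def split: if_splits)
    show "\<And>x y z. T \<rho> n x = Some z \<Longrightarrow> T \<rho> n y = Some z \<Longrightarrow> x = y"
    proof -
      fix x y z assume "T \<rho> n x = Some z" "T \<rho> n y = Some z"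
      hence x: "x \<in> Npts n" and y: "y \<in> Npts n" and e: "P \<rho> n x = P \<rho> n y"
        by (auto simp: T_def split: if_splits)
      show "x = y"
      proof (rule nth_equalityI)
        show "length x = length y" using x y by (simp add: Npts_len)
        fix i assume "i < length x"
        hence i: "i < n" using x by (simp add: Npts_len)
        have "P \<rho> n x ! ?s i = P \<rho> n y ! ?s i" using e by simp
        thus "x ! i = y ! i" using s_lt[OF i] r1[OF i] by simp
      qed
    qed
    show "\<And>x y x' y'. T \<rho> n x = Some x' \<Longrightarrow> T \<rho> n y = Some y' \<Longrightarrow> eucl_dist x' y' = eucl_dist x y"
    proof -
      fix x y x' y' assume "T \<rho> n x = Some x'" "T \<rho> n y = Some y'"
      hence x: "x \<in> Npts n" and y: "y \<in> Npts n" and e: "x' = P \<rho> n x" "y' = P \<rho> n y"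
        by (auto simp: T_def split: if_splits)
      have "sq n x' y' = (\<Sum>k<n. (\<lambda>i. (int (x!i) - int (y!i))^2) (\<rho> k))"
        unfolding sq_def e by (rule sum.cong) simp_all
      also have "\<dots> = sq n x y" unfolding sq_def by (rule sum.reindex_bij_betw[OF b])
      finally show "eucl_dist x' y' = eucl_dist x y"
        using iso_sq[of x n x'] x e by (simp add: Npts_len)
    qed
    show "finite (Npts n - dom (T \<rho> n))" "finite (Npts n - ran (T \<rho> n))" using dT rT by (simp_all add: Diff_eq_empty_iff[THEN iffD2])
  qed
qed

lemma Npts_rep: "c \<ge> 1 \<Longrightarrow> replicate n c \<in> Npts n" by (simp add: Npts_def)

lemma Npts_upd: "x \<in> Npts n \<Longrightarrow> v \<ge> 1 \<Longrightarrow> x[i := v] \<in> Npts n"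
  unfolding Npts_def
proof (intro CollectI conjI allI impI)
  assume x: "x \<in> {x. length x = n \<and> (\<forall>i<n. 1 \<le> x ! i)}" and v: "v \<ge> 1"
  show "length (x[i := v]) = n" using x by simp
  fix k assume k: "k < n"
  show "1 \<le> x[i := v] ! k"
  proof (cases "k = i")
    case True thus ?thesis using x k v by simp
  next
    case False thus ?thesis using x k by simp
  qed
qed

lemma Npts_ge1: "x \<in> Npts n \<Longrightarrow> k < n \<Longrightarrow> x ! k \<ge> 1" by (simp add: Npts_def)

lemma single_sum2:
  fixes z y :: "nat \<Rightarrow> int"
  assumes "k < n" "\<forall>j<n. j \<noteq> k \<longrightarrow> z j = 0"
  shows "(\<Sum>j<n. y j * z j) = y k * z k"
  using single_sum[OF assms, of y] by (simp add: mult.commute)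

lemma ip_pres:
  assumes a: "\<alpha> \<in> IN_inf n" and "\<alpha> x = Some x'" "\<alpha> y = Some y'" "\<alpha> z = Some z'"
  shows "ip n x' y' z' = ip n x y z"
proof -
  have "2 * ip n x' y' z' = 2 * ip n x y z"
    unfolding polar using S_sq[OF a assms(3) assms(2)] S_sq[OF a assms(4) assms(2)] S_sq[OF a assms(3) assms(4)]
    by simp
  thus ?thesis by simp
qed

lemma ip_unit:
  assumes "length x = n" "i < n"
  shows "ip n (replicate n M) x ((replicate n M)[i := Suc M]) = int (x ! i) - int M"
proof -
  have "ip n (replicate n M) x ((replicate n M)[i := Suc M])
      = (\<Sum>k<n. if k = i then int (x ! i) - int M else 0)"
    unfolding ip_def by (rule sum.cong) (auto simp: nth_list_update)
  also have "\<dots> = int (x ! i) - int M" using assms by simp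
  finally show ?thesis .
qed

lemma extension:
  assumes n2: "n \<ge> 2" and a: "\<alpha> \<in> IN_inf n"
  shows "\<exists>\<rho>. bij_betw \<rho> {..<n} {..<n} \<and> (\<forall>x y. \<alpha> x = Some y \<longrightarrow> y = P \<rho> n x)"
proof -
  define f where "f x = the (\<alpha> x)" for x
  have cof: "finite ((Npts n - dom \<alpha>) \<union> (Npts n - ran \<alpha>))" using S_cof[OF a] by simp
  obtain M0 where M0: "\<forall>z\<in>(Npts n - dom \<alpha>) \<union> (Npts n - ran \<alpha>). \<forall>k<length z. z ! k < M0"
    using finite_bound[OF cof] by blast
  define M where "M = Suc M0"
  have M1: "M \<ge> 1" by (simp add: M_def)
  have inD: "x \<in> dom \<alpha>" if "x \<in> Npts n" "k < n" "x ! k \<ge> M" for x k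
  proof (rule ccontr)
    assume "x \<notin> dom \<alpha>"
    hence "x \<in> (Npts n - dom \<alpha>) \<union> (Npts n - ran \<alpha>)" using that(1) by blast
    moreover have "k < length x" using that(1,2) by (simp add: Npts_len)
    ultimately have "x ! k < M0" using M0 by blast
    thus False using that(3) by (simp add: M_def)
  qed
  have inR: "y \<in> ran \<alpha>" if "y \<in> Npts n" "k < n" "y ! k \<ge> M" for y k
  proof (rule ccontr)
    assume "y \<notin> ran \<alpha>"
    hence "y \<in> (Npts n - dom \<alpha>) \<union> (Npts n - ran \<alpha>)" using that(1) by blast
    moreover have "k < length y" using that(1,2) by (simp add: Npts_len)
    ultimately have "y ! k < M0" using M0 by blast
    thus False using that(3) by (simp add: M_def)
  qed
  have fD: "\<alpha> x = Some (f x)" if "x \<in> dom \<alpha>" for x using that by (auto simp: f_def)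
  have fN: "f x \<in> Npts n" if "x \<in> dom \<alpha>" for x using S_pts[OF a fD[OF that]] by simp
  have DN: "x \<in> Npts n" if "x \<in> dom \<alpha>" for x using S_pts[OF a fD[OF that]] by simp
  define A where "A = replicate n M"
  define B where "B i = A[i := Suc M]" for i
  have AN: "A \<in> Npts n" unfolding A_def using M1 by (rule Npts_rep)
  have AD: "A \<in> dom \<alpha>" using inD[OF AN, of 0] n2 by (simp add: A_def)
  have BN: "B i \<in> Npts n" for i unfolding B_def using AN by (rule Npts_upd) simp
  have BD: "B i \<in> dom \<alpha>" if "i < n" for i using inD[OF BN, of i] that by (simp add: B_def A_def)
  have pres: "ip n (f A) (f x) (f y) = ip n A x y" if "x \<in> dom \<alpha>" "y \<in> dom \<alpha>" for x y
    using ip_pres[OF a fD[OF AD] fD[OF that(1)] fD[OF that(2)]] .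
  have ipA: "ip n A x (B i) = int (x ! i) - int M" if "x \<in> Npts n" "i < n" for x i
    using ip_unit[of x n i M] that by (simp add: A_def B_def Npts_len)
  define v where "v i k = int (f (B i) ! k) - int (f A ! k)" for i k
  define w where "w x k = int (f x ! k) - int (f A ! k)" for x k
  have ipv: "(\<Sum>k<n. w x k * v i k) = int (x ! i) - int M" if "x \<in> dom \<alpha>" "i < n" for x i
  proof -
    have "(\<Sum>k<n. w x k * v i k) = ip n (f A) (f x) (f (B i))" by (simp add: ip_def w_def v_def)
    also have "\<dots> = int (x ! i) - int M" using pres[OF that(1) BD[OF that(2)]] ipA[OF DN[OF that(1)] that(2)] by simp
    finally show ?thesis .
  qed
  have wv: "w (B j) k = v j k" for j k by (simp add: w_def v_def)
  have BB: "(\<Sum>k<n. v j k * v i k) = (if i = j then 1 else 0)" if "i < n" "j < n" for i j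
    using ipv[OF BD[OF that(2)] that(1)] that unfolding wv by (simp add: B_def A_def)
  have "\<forall>i. \<exists>k. i < n \<longrightarrow> k < n \<and> (v i k = 1 \<or> v i k = -1) \<and> (\<forall>j<n. j \<noteq> k \<longrightarrow> v i j = 0)"
  proof
    fix i show "\<exists>k. i < n \<longrightarrow> k < n \<and> (v i k = 1 \<or> v i k = -1) \<and> (\<forall>j<n. j \<noteq> k \<longrightarrow> v i j = 0)"
    proof (cases "i < n")
      case True
      have "(\<Sum>k<n. v i k * v i k) = 1" using BB[OF True True] by simp
      thus ?thesis using unit_int by blast
    qed simp
  qed
  from choice[OF this] obtain \<pi> where \<pi>0: "\<forall>i. i < n \<longrightarrow> \<pi> i < n \<and> (v i (\<pi> i) = 1 \<or> v i (\<pi> i) = -1) \<and> (\<forall>j<n. j \<noteq> \<pi> i \<longrightarrow> v i j = 0)"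
    by blast
  hence \<pi>: "\<And>i. i < n \<Longrightarrow> \<pi> i < n \<and> (v i (\<pi> i) = 1 \<or> v i (\<pi> i) = -1) \<and> (\<forall>j<n. j \<noteq> \<pi> i \<longrightarrow> v i j = 0)"
    by blast
  define \<epsilon> where "\<epsilon> i = v i (\<pi> i)" for i
  have eps2: "\<epsilon> i * \<epsilon> i = 1" if "i < n" for i using \<pi>[OF that] by (auto simp: \<epsilon>_def)
  have inj: "inj_on \<pi> {..<n}"
  proof (rule inj_onI)
    fix i j assume i: "i \<in> {..<n}" and j: "j \<in> {..<n}" and e: "\<pi> i = \<pi> j"
    show "i = j"
    proof (rule ccontr)
      assume ne: "i \<noteq> j"
      have "(\<Sum>k<n. v j k * v i k) = v j (\<pi> i) * v i (\<pi> i)"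
        using single_sum2[of "\<pi> i" n "v i" "v j"] \<pi> i by simp
      also have "\<dots> = \<epsilon> j * \<epsilon> i" using e by (simp add: \<epsilon>_def)
      finally have "(\<Sum>k<n. v j k * v i k) \<noteq> 0" using eps2[of i] eps2[of j] i j by auto
      thus False using BB[of i j] i j ne by simp
    qed
  qed
  have pil: "\<pi> ` {..<n} \<subseteq> {..<n}" using \<pi> by auto
  have bij: "bij_betw \<pi> {..<n} {..<n}"
    unfolding bij_betw_def using inj endo_inj_surj[OF _ pil inj] by simp
  have key: "int (f x ! \<pi> i) = int (f A ! \<pi> i) + \<epsilon> i * (int (x ! i) - int M)"
    if "x \<in> dom \<alpha>" "i < n" for x i
  proof -
    have "(\<Sum>k<n. w x k * v i k) = w x (\<pi> i) * \<epsilon> i"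
      using single_sum2[of "\<pi> i" n "v i" "w x"] \<pi>[OF that(2)] by (simp add: \<epsilon>_def)
    hence "w x (\<pi> i) * \<epsilon> i = int (x ! i) - int M" using ipv[OF that] by simp
    hence "w x (\<pi> i) * \<epsilon> i * \<epsilon> i = \<epsilon> i * (int (x ! i) - int M)" by (simp add: mult.commute)
    hence "w x (\<pi> i) = \<epsilon> i * (int (x ! i) - int M)" using eps2[OF that(2)] by (simp add: mult.assoc)
    thus ?thesis by (simp add: w_def)
  qed
  have epos: "\<epsilon> i = 1" if i: "i < n" for i
  proof (rule ccontr)
    assume "\<epsilon> i \<noteq> 1"
    hence em: "\<epsilon> i = -1" using \<pi>[OF i] by (auto simp: \<epsilon>_def)
    define K where "K = M + f A ! \<pi> i"
    define x where "x = A[i := K]"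
    have xN: "x \<in> Npts n" unfolding x_def using AN by (rule Npts_upd) (simp add: K_def M_def)
    have xi: "x ! i = K" using i by (simp add: x_def A_def)
    have xD: "x \<in> dom \<alpha>" using inD[OF xN i] xi by (simp add: K_def)
    have "int (f x ! \<pi> i) = 0" using key[OF xD i] em xi by (simp add: K_def)
    moreover have "f x ! \<pi> i \<ge> 1" using Npts_ge1[OF fN[OF xD]] \<pi>[OF i] by simp
    ultimately show False by simp
  qed
  have key2: "int (f x ! \<pi> i) = (int (f A ! \<pi> i) - int M) + int (x ! i)"
    if "x \<in> dom \<alpha>" "i < n" for x i using key[OF that] epos[OF that(2)] by simp
  have c0: "int (f A ! \<pi> i) - int M = 0" if i: "i < n" for i
  proof -
    define j where "j = (if i = 0 then 1 else (0::nat))"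
    have j: "j < n" "j \<noteq> i" using n2 by (auto simp: j_def)
    have one: "replicate n 1 \<in> Npts n" by (rule Npts_rep) simp
    define x where "x = (replicate n 1)[j := M]"
    have xN: "x \<in> Npts n" unfolding x_def using one M1 by (rule Npts_upd)
    have xD: "x \<in> dom \<alpha>" using inD[OF xN j(1)] j by (simp add: x_def)
    have xi: "x ! i = 1" using i j by (simp add: x_def)
    have ge: "int (f A ! \<pi> i) - int M \<ge> 0"
      using key2[OF xD i] xi Npts_ge1[OF fN[OF xD] conjunct1[OF \<pi>[OF i]]] by simp
    have pj: "\<pi> j \<noteq> \<pi> i" "\<pi> j < n" "\<pi> i < n" using inj j i \<pi> by (auto simp: inj_on_def)
    define y where "y = (replicate n 1)[\<pi> j := M]"
    have yN: "y \<in> Npts n" unfolding y_def using one M1 by (rule Npts_upd)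
    have yR: "y \<in> ran \<alpha>" using inR[OF yN pj(2)] pj by (simp add: y_def)
    then obtain z where z: "\<alpha> z = Some y" by (auto simp: ran_def)
    have zD: "z \<in> dom \<alpha>" using z by auto
    have fz: "f z = y" using z by (simp add: f_def)
    have "int (y ! \<pi> i) = 1" using pj by (simp add: y_def)
    hence "1 = (int (f A ! \<pi> i) - int M) + int (z ! i)" using key2[OF zD i] fz by simp
    moreover have "z ! i \<ge> 1" using Npts_ge1[OF DN[OF zD] i] .
    ultimately have "int (f A ! \<pi> i) - int M \<le> 0" by simp
    with ge show ?thesis by simp
  qed
  have fin: "f x ! \<pi> i = x ! i" if "x \<in> dom \<alpha>" "i < n" for x i
    using key2[OF that] c0[OF that(2)] by simp
  define \<rho> where "\<rho> = inv_into {..<n} \<pi>"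
  have brho: "bij_betw \<rho> {..<n} {..<n}" unfolding \<rho>_def using bij by (rule bij_betw_inv_into)
  have r1: "\<And>k. k < n \<Longrightarrow> \<pi> (\<rho> k) = k" unfolding \<rho>_def using bij by (simp add: bij_betw_inv_into_right)
  have rl: "\<And>k. k < n \<Longrightarrow> \<rho> k < n" using brho by (meson bij_betw_apply lessThan_iff)
  have "\<forall>x y. \<alpha> x = Some y \<longrightarrow> y = P \<rho> n x"
  proof (intro allI impI)
    fix x y assume xy: "\<alpha> x = Some y"
    hence xD: "x \<in> dom \<alpha>" and fy: "f x = y" by (auto simp: f_def)
    show "y = P \<rho> n x"
    proof (rule nth_equalityI)
      show "length y = length (P \<rho> n x)" using fN[OF xD] fy by (simp add: Npts_len)
      fix k assume "k < length y"
      hence k: "k < n" using fN[OF xD] fy by (simp add: Npts_len)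
      have "y ! k = f x ! \<pi> (\<rho> k)" using fy r1[OF k] by simp
      also have "\<dots> = x ! \<rho> k" using fin[OF xD rl[OF k]] .
      finally show "y ! k = P \<rho> n x ! k" using k by simp
    qed
  qed
  thus ?thesis using brho by blast
qed

lemma T_max:
  assumes b: "bij_betw \<rho> {..<n} {..<n}" shows "maximal_in (IN_inf n) pcomp (T \<rho> n)"
  unfolding maximal_in_def
proof (intro conjI ballI impI)
  show "T \<rho> n \<in> IN_inf n" using T_in[OF b] .
  fix t assume t: "t \<in> IN_inf n" and po: "nat_po (IN_inf n) pcomp (T \<rho> n) t"
  have le: "T \<rho> n \<subseteq>\<^sub>m t" using po_le[OF po] .
  show "t = T \<rho> n"
  proof
    fix x show "t x = T \<rho> n x"
    proof (cases "x \<in> Npts n")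
      case True
      hence "x \<in> dom (T \<rho> n)" by (simp add: T_def dom_def)
      thus ?thesis using le by (simp add: map_le_def)
    next
      case False
      have "t x = None"
      proof (rule ccontr)
        assume "t x \<noteq> None"
        then obtain y where "t x = Some y" by auto
        thus False using S_pts[OF t] False by blast
      qed
      thus ?thesis using False by (simp add: T_def)
    qed
  qed
qed

lemma sub_T:
  assumes s: "s \<in> IN_inf n" and h: "\<forall>x y. s x = Some y \<longrightarrow> y = P \<rho> n x"
  shows "s \<subseteq>\<^sub>m T \<rho> n"
  unfolding map_le_def
proof
  fix x assume "x \<in> dom s"
  then obtain y where y: "s x = Some y" by auto
  hence "x \<in> Npts n" using S_pts[OF s] by blast
  thus "s x = T \<rho> n x" using y h by (simp add: T_def)
qed

lemma max_is_T:
  assumes n2: "n \<ge> 2" and u: "maximal_in (IN_inf n) pcomp u"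
  shows "\<exists>\<rho>. bij_betw \<rho> {..<n} {..<n} \<and> u = T \<rho> n"
proof -
  have uS: "u \<in> IN_inf n" using u by (simp add: maximal_in_def)
  obtain \<rho> where b: "bij_betw \<rho> {..<n} {..<n}" and h: "\<forall>x y. u x = Some y \<longrightarrow> y = P \<rho> n x"
    using extension[OF n2 uS] by blast
  have "nat_po (IN_inf n) pcomp u (T \<rho> n)" using le_po[OF uS T_in[OF b] sub_T[OF uS h]] .
  hence "T \<rho> n = u" using u T_in[OF b] by (simp add: maximal_in_def)
  thus ?thesis using b by blast
qed

lemma T_unique:
  assumes n2: "n \<ge> 2" and s: "s \<in> IN_inf n"
    and b1: "bij_betw \<rho>1 {..<n} {..<n}" and b2: "bij_betw \<rho>2 {..<n} {..<n}"
    and l1: "s \<subseteq>\<^sub>m T \<rho>1 n" and l2: "s \<subseteq>\<^sub>m T \<rho>2 n"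
  shows "T \<rho>1 n = T \<rho>2 n"
proof -
  obtain M0 where M0: "\<forall>z\<in>(Npts n - dom s). \<forall>k<length z. z ! k < M0"
    using finite_bound S_cof[OF s] by blast
  define x where "x = map (\<lambda>k. Suc M0 + k) [0..<n]"
  have xN: "x \<in> Npts n" by (simp add: x_def Npts_def)
  have xD: "x \<in> dom s"
  proof (rule ccontr)
    assume "x \<notin> dom s"
    hence "x \<in> Npts n - dom s" using xN by blast
    moreover have "0 < length x" using n2 by (simp add: x_def)
    ultimately have "x ! 0 < M0" using M0 by blast
    thus False using n2 by (simp add: x_def)
  qed
  have "s x = T \<rho>1 n x" "s x = T \<rho>2 n x" using l1 l2 xD by (simp_all add: map_le_def)
  hence e: "P \<rho>1 n x = P \<rho>2 n x" using xN by (simp add: T_def)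
  have eq: "\<rho>1 k = \<rho>2 k" if k: "k < n" for k
  proof -
    have lt: "\<rho>1 k < n" "\<rho>2 k < n" using b1 b2 k by (meson bij_betw_apply lessThan_iff)+
    have "x ! \<rho>1 k = x ! \<rho>2 k" using e k by (metis P_nth)
    thus ?thesis using lt by (simp add: x_def)
  qed
  have "\<And>z. P \<rho>1 n z = P \<rho>2 n z" unfolding P_def using eq by (intro map_cong) auto
  hence "\<And>z. T \<rho>1 n z = T \<rho>2 n z" by (simp add: T_def)
  thus ?thesis by (rule ext)
qed

theorem corollary4p1:
  fixes n :: nat
  assumes "n \<ge> 2"
  shows "F_inverse (IN_inf n) pcomp"
  unfolding F_inverse_def
proof (intro conjI ballI)
  show "inverse_semigroup_on (IN_inf n) pcomp" by (rule inverse_sg)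
  fix s assume s: "s \<in> IN_inf n"
  obtain \<rho> where b: "bij_betw \<rho> {..<n} {..<n}" and h: "\<forall>x y. s x = Some y \<longrightarrow> y = P \<rho> n x"
    using extension[OF assms s] by blast
  have l: "s \<subseteq>\<^sub>m T \<rho> n" using sub_T[OF s h] .
  show "\<exists>!u. maximal_in (IN_inf n) pcomp u \<and> nat_po (IN_inf n) pcomp s u"
  proof (rule ex1I[of _ "T \<rho> n"])
    show "maximal_in (IN_inf n) pcomp (T \<rho> n) \<and> nat_po (IN_inf n) pcomp s (T \<rho> n)"
      using T_max[OF b] le_po[OF s T_in[OF b] l] by blast
    fix u assume u: "maximal_in (IN_inf n) pcomp u \<and> nat_po (IN_inf n) pcomp s u"
    obtain \<rho>' where b': "bij_betw \<rho>' {..<n} {..<n}" and ue: "u = T \<rho>' n"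
      using max_is_T[OF assms] u by blast
    have "s \<subseteq>\<^sub>m T \<rho>' n" using po_le u ue by blast
    thus "u = T \<rho> n" using T_unique[OF assms s b b' l] ue by simp
  qed
qed

end
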